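(* Let $\mathbb{N}\subseteq\mathbb{R}^n$ be a linear subspace. There exists a constant $C(\mathbb{N})<1$ such that for all ${\bm a},{\bm b}\in\mathbb{R}^n$ and ${\bm r}\in\mathbb{N}$ with $\operatorname{sgn}({\bm a})=\operatorname{sgn}({\bm b})$ (componentwise, with $\operatorname{sgn}(0)=0$) and ${\bm b}\in\mathbb{N}^\perp$, we have $|\langle{\bm r},{\bm a}\rangle|\le C(\mathbb{N})\|{\bm r}\|_2\|{\bm a}\|_2$. *)

theory Defs
  imports "HOL-Analysis.Analysis"
begin

end

theory Submission
  imports Defs
begin

lemma finite_choose_bound:
  assumes "finite S" and "\<forall>s\<in>S. \<exists>c::real. c < 1 \<and> P s c"
    and mono: "\<And>s c d. P s c \<Longrightarrow> c \<le> d \<Longrightarrow> P s d"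
  shows "\<exists>c::real. c < 1 \<and> (\<forall>s\<in>S. P s c)"
  using assms(1,2)
proof (induction S rule: finite_induct)
  case empty
  then show ?case by (intro exI[of _ 0]) auto
next
  case (insert x F)
  then obtain c where c: "c < 1" "\<forall>s\<in>F. P s c" by auto
  from insert obtain d where d: "d < 1" "P x d" by auto
  show ?case
    apply (intro exI[of _ "max c d"])
    using c d mono by (auto intro: mono)
qed

definition sgnv :: "real ^ 'n \<Rightarrow> real ^ 'n" where
  "sgnv b = (\<chi> i. sgn (b $ i))"

definition Kset :: "real ^ 'n \<Rightarrow> (real ^ 'n) set" where
  "Kset s = sphere 0 1 \<inter> {a. \<forall>i. 0 \<le> a $ i * s $ i \<and> (s $ i = 0 \<longrightarrow> a $ i = 0)}"

lemma compact_Kset: "compact (Kset (s::real^'n))"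
proof -
  have "closed {a::real^'n. \<forall>i. 0 \<le> a $ i * s $ i \<and> (s $ i = 0 \<longrightarrow> a $ i = 0)}"
    by (intro closed_Collect_all closed_Collect_conj closed_Collect_le closed_Collect_imp
        closed_Collect_eq) (auto intro!: continuous_intros)
  then show ?thesis unfolding Kset_def
    by (simp add: compact_Int_closed)
qed

lemma finite_sgnv: "finite (range (sgnv :: real^'n \<Rightarrow> real^'n))"
proof -
  have "range (sgnv :: real^'n \<Rightarrow> real^'n) \<subseteq> (\<lambda>f. \<chi> i. f i) ` (PiE UNIV (\<lambda>_. {-1,0,1::real}))"
  proof
    fix x assume "x \<in> range (sgnv :: real^'n \<Rightarrow> real^'n)"
    then obtain b where x: "x = sgnv b" by auto
    have "(\<lambda>i. sgn (b $ i)) \<in> PiE UNIV (\<lambda>_. {-1,0,1::real})"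
      by (auto simp: sgn_real_def split: if_splits)
    then show "x \<in> (\<lambda>f. \<chi> i. f i) ` (PiE UNIV (\<lambda>_. {-1,0,1::real}))"
      unfolding x sgnv_def by blast
  qed
  moreover have "finite ((\<lambda>f. \<chi> i. f i) ` (PiE UNIV (\<lambda>_. {-1,0,1::real})) :: (real^'n) set)"
    by (intro finite_imageI finite_PiE) auto
  ultimately show ?thesis by (rule finite_subset)
qed

lemma key_bound:
  fixes N :: "(real ^ 'n) set"
  assumes N: "subspace N" and b: "b \<in> orthogonal_comp N"
  shows "\<exists>c::real. c < 1 \<and> (\<forall>r\<in>N \<inter> sphere 0 1. \<forall>a\<in>Kset (sgnv b). \<bar>r \<bullet> a\<bar> \<le> c)"
proof (cases "(N \<inter> sphere 0 1) \<times> Kset (sgnv b) = {}")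
  case True
  then show ?thesis by (intro exI[of _ 0]) auto
next
  case False
  have cT: "compact (N \<inter> sphere 0 1)"
    using closed_subspace[OF N] compact_Int_closed[OF compact_sphere[of "0::real^'n" 1]] by (simp add: Int_commute)
  have cp: "compact ((N \<inter> sphere 0 1) \<times> Kset (sgnv b))"
    using cT compact_Kset by (rule compact_Times)
  have cont: "continuous_on ((N \<inter> sphere 0 1) \<times> Kset (sgnv b)) (\<lambda>p. \<bar>fst p \<bullet> snd p\<bar>)"
    by (intro continuous_intros)
  obtain p where p: "p \<in> (N \<inter> sphere 0 1) \<times> Kset (sgnv b)"
    and pmax: "\<forall>q\<in>(N \<inter> sphere 0 1) \<times> Kset (sgnv b). \<bar>fst q \<bullet> snd q\<bar> \<le> \<bar>fst p \<bullet> snd p\<bar>"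
    using compact_attains_sup[OF compact_continuous_image[OF cont cp]] False by fastforce
  obtain r0 a0 where p0: "p = (r0, a0)" by (cases p)
  have r0: "r0 \<in> N" "norm r0 = 1" and a0: "a0 \<in> Kset (sgnv b)" using p p0 by auto
  have na0: "norm a0 = 1" and a0s: "\<And>i. 0 \<le> a0 $ i * sgnv b $ i \<and> (sgnv b $ i = 0 \<longrightarrow> a0 $ i = 0)"
    using a0 unfolding Kset_def by auto
  have le1: "\<bar>r0 \<bullet> a0\<bar> \<le> 1" using Cauchy_Schwarz_ineq2[of r0 a0] r0 na0 by simp
  have ne1: "\<bar>r0 \<bullet> a0\<bar> \<noteq> 1"
  proof
    assume "\<bar>r0 \<bullet> a0\<bar> = 1"
    then have "\<bar>r0 \<bullet> a0\<bar> = norm r0 * norm a0" using r0 na0 by simp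
    then have "a0 = r0 \<or> a0 = - r0" using norm_cauchy_schwarz_abs_eq[of r0 a0] r0 na0 by auto
    then have a0N: "a0 \<in> N" using r0 N by (auto simp: subspace_neg)
    then have "a0 \<bullet> b = 0" using b unfolding orthogonal_comp_def orthogonal_def by auto
    then have sum0: "(\<Sum>i\<in>UNIV. a0 $ i * b $ i) = 0" by (simp add: inner_vec_def)
    have nn: "\<And>i. 0 \<le> a0 $ i * b $ i"
    proof -
      fix i
      have "b $ i = sgnv b $ i * \<bar>b $ i\<bar>" by (simp add: sgnv_def sgn_mult_abs)
      then have "a0 $ i * b $ i = (a0 $ i * sgnv b $ i) * \<bar>b $ i\<bar>"
        by (metis mult.assoc)
      then show "0 \<le> a0 $ i * b $ i" using a0s[of i] by (metis abs_ge_zero mult_nonneg_nonneg)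
    qed
    have "\<forall>i\<in>UNIV. a0 $ i * b $ i = 0"
      using sum_nonneg_eq_0_iff[of UNIV "\<lambda>i. a0 $ i * b $ i"] sum0 nn by simp
    then have "\<And>i. a0 $ i = 0" using a0s by (auto simp: sgnv_def)
    then have "a0 = 0" by (simp add: vec_eq_iff)
    then show False using na0 by simp
  qed
  show ?thesis
    apply (intro exI[of _ "\<bar>r0 \<bullet> a0\<bar>"])
    using le1 ne1 pmax p0 by auto
qed

theorem mainTheorem6:
  fixes N :: "(real ^ 'n) set"
  assumes "subspace N"
  shows "\<exists>C::real. C < 1 \<and>
    (\<forall>a b r. r \<in> N \<longrightarrow> b \<in> orthogonal_comp N \<longrightarrow>
       (\<forall>i. sgn (a $ i) = sgn (b $ i)) \<longrightarrow>
       \<bar>r \<bullet> a\<bar> \<le> C * norm r * norm a)"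
proof -
  let ?S = "sgnv ` orthogonal_comp N"
  have fin: "finite ?S" using finite_sgnv by (rule finite_subset[rotated]) auto
  have "\<forall>s\<in>?S. \<exists>c::real. c < 1 \<and> (\<forall>r\<in>N \<inter> sphere 0 1. \<forall>a\<in>Kset s. \<bar>r \<bullet> a\<bar> \<le> c)"
    using key_bound[OF assms] by auto
  then have "\<exists>C::real. C < 1 \<and> (\<forall>s\<in>?S. \<forall>r\<in>N \<inter> sphere 0 1. \<forall>a\<in>Kset s. \<bar>r \<bullet> a\<bar> \<le> C)"
    by (rule finite_choose_bound[OF fin]) (meson order_trans)
  then obtain C where C: "C < 1"
    "\<forall>s\<in>?S. \<forall>r\<in>N \<inter> sphere 0 1. \<forall>a\<in>Kset s. \<bar>r \<bullet> a\<bar> \<le> C"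
    by fastforce
  show ?thesis
  proof (intro exI[of _ C] conjI allI impI)
    show "C < 1" by fact
    fix a b r :: "real^'n"
    assume rN: "r \<in> N" and b: "b \<in> orthogonal_comp N" and sg: "\<forall>i. sgn (a $ i) = sgn (b $ i)"
    show "\<bar>r \<bullet> a\<bar> \<le> C * norm r * norm a"
    proof (cases "r = 0 \<or> a = 0")
      case True then show ?thesis by auto
    next
      case False
      then have nr: "norm r > 0" and na: "norm a > 0" by auto
      define r' where "r' = r /\<^sub>R norm r"
      define a' where "a' = a /\<^sub>R norm a"
      have r': "r' \<in> N \<inter> sphere 0 1" using rN nr assms unfolding r'_def
        by (auto simp: subspace_scale)
      have a': "a' \<in> Kset (sgnv b)"
        unfolding Kset_def
      proof (intro IntI CollectI allI conjI impI)
        show "a' \<in> sphere 0 1" using na by (simp add: a'_def)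
        fix i
        have "a $ i * sgnv b $ i = \<bar>a $ i\<bar>" using sg[rule_format, of i]
          by (simp add: sgnv_def sgn_real_def abs_if split: if_splits)
        then have "a' $ i * sgnv b $ i = inverse (norm a) * \<bar>a $ i\<bar>" by (simp add: a'_def mult.assoc)
        then show "0 \<le> a' $ i * sgnv b $ i" using na by simp
        assume "sgnv b $ i = 0"
        then show "a' $ i = 0" using sg[rule_format, of i] by (simp add: sgnv_def a'_def sgn_eq_0_iff)
      qed
      have "\<bar>r' \<bullet> a'\<bar> \<le> C" using C(2) b r' a' by blast
      moreover have "\<bar>r' \<bullet> a'\<bar> = \<bar>r \<bullet> a\<bar> / (norm r * norm a)"
        using nr na by (simp add: r'_def a'_def abs_mult field_simps)
      ultimately have "\<bar>r \<bullet> a\<bar> / (norm r * norm a) \<le> C" by simp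
      then show ?thesis using nr na by (simp add: divide_le_eq mult_ac)
    qed
  qed
qed

end
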